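(* Let $\lambda\in(0,1]$, $x=3\lambda/2$ and $y=(2\lambda-x)/2=\lambda/4$. Place a coordinate system with origin at a point $o$ ($x$-axis pointing East, $y$-axis pointing North) and consider the eight open squares with horizontal and vertical sides of side length $x$ centered at $(0,\pm(\lambda+x/2))$, $(\pm(\lambda+x/2),0)$, and $(\pm(x+y),\pm(\lambda+x/2))$ (all four sign combinations), i.e. the gadget $G(o)$. Let $S(o)$ be the convex hull of these eight squares, a square of side $3x+2y$ centered at $o$. Then for every point $a$ not in $S(o)$, the segment $ao$ meets the interior of at least one of the eight squares; in particular, if these squares are obstacles of a terrain, an agent located outside $S(o)$ cannot see $o$.
   Context: An agent at a point $a$ of a terrain sees a point $b$ only if the segment $ab$ is contained in the terrain (and has length at most $1$); obstacles are open sets removed from the terrain. *)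

theory Defs
  imports "HOL-Analysis.Analysis"
begin

definition open_square :: "real \<times> real \<Rightarrow> real \<Rightarrow> (real \<times> real) set" where
  "open_square c s = {p. \<bar>fst p - fst c\<bar> < s / 2 \<and> \<bar>snd p - snd c\<bar> < s / 2}"

definition gad_x :: "real \<Rightarrow> real" where
  "gad_x lam = 3 * lam / 2"

definition gad_y :: "real \<Rightarrow> real" where
  "gad_y lam = (2 * lam - gad_x lam) / 2"

definition gadget_centers :: "real \<Rightarrow> (real \<times> real) set" where
  "gadget_centers lam =
     (let x = gad_x lam; y = gad_y lam; h = lam + x / 2 in
      {(0, h), (0, -h), (h, 0), (-h, 0),
       (x + y, h), (x + y, -h), (-(x + y), h), (-(x + y), -h)})"

definition gadget :: "real \<Rightarrow> real \<times> real \<Rightarrow> (real \<times> real) set set" where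
  "gadget lam p0 = (\<lambda>c. open_square (p0 + c) (gad_x lam)) ` gadget_centers lam"

definition gadget_hull :: "real \<Rightarrow> real \<times> real \<Rightarrow> (real \<times> real) set" where
  "gadget_hull lam p0 = convex hull (\<Union> (gadget lam p0))"

end

theory Submission
  imports Defs
begin

lemma open_open_square: "open (open_square c s)"
  unfolding open_square_def
  by (intro open_Collect_conj open_Collect_less continuous_intros)

lemma key:
  fixes lam D E :: real
  assumes "0 < lam" "5*lam/2 \<le> D" "\<bar>E\<bar> \<le> D"
  shows "\<exists>t. 0 \<le> t \<and> t \<le> 1 \<and> \<bar>t*D - 7*lam/4\<bar> < 3*lam/4 \<and>
     (\<bar>t*E\<bar> < 3*lam/4 \<or> \<bar>t*E - 7*lam/4\<bar> < 3*lam/4 \<or> \<bar>t*E + 7*lam/4\<bar> < 3*lam/4)"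
proof -
  have D: "D > 0" using assms by linarith
  show ?thesis
  proof (cases "\<bar>E\<bar> * 11 < 7 * D")
    case True
    define t where "t = 11*lam/(10*D)"
    have tD: "t*D = 11*lam/10" using D by (simp add: t_def)
    have tE: "t*\<bar>E\<bar> < 3*lam/4"
    proof -
      have "t*\<bar>E\<bar> = 11*lam*\<bar>E\<bar>/(10*D)" by (simp add: t_def)
      also have "\<dots> < 3*lam/4" using D assms(1) True
        by (simp add: divide_less_eq)
      finally show ?thesis .
    qed
    have "0 \<le> t" using D assms by (simp add: t_def)
    moreover have "t \<le> 1" using D assms by (simp add: t_def)
    moreover have "\<bar>t*E\<bar> < 3*lam/4" using tE \<open>0 \<le> t\<close> by (simp add: abs_mult)
    ultimately show ?thesis using tD assms(1) by (intro exI[of _ t]) auto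
  next
    case False
    define t where "t = 12*lam/(5*D)"
    have tD: "t*D = 12*lam/5" using D by (simp add: t_def)
    have "0 \<le> t" using D assms by (simp add: t_def)
    have le1: "t \<le> 1" using D assms by (simp add: t_def)
    have "t*\<bar>E\<bar> \<le> t*D" using \<open>0\<le>t\<close> assms by (simp add: mult_left_mono)
    moreover have "t*\<bar>E\<bar> * 11 \<ge> t*7*D" using \<open>0\<le>t\<close> False
      by (metis mult.assoc mult.commute mult_left_mono not_less)
    moreover have "t*7*D = 7*(t*D)" by simp
    ultimately have "\<bar>t*\<bar>E\<bar> - 7*lam/4\<bar> < 3*lam/4" using tD assms(1) unfolding abs_less_iff by linarith
    hence "\<bar>t*E - 7*lam/4\<bar> < 3*lam/4 \<or> \<bar>t*E + 7*lam/4\<bar> < 3*lam/4"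
    proof (cases "E \<ge> 0")
      case True
      then have "t*\<bar>E\<bar> = t*E" by simp
      then show ?thesis using \<open>\<bar>t*\<bar>E\<bar> - 7*lam/4\<bar> < 3*lam/4\<close> unfolding abs_less_iff by linarith
    next
      case False
      then have "t*\<bar>E\<bar> = -(t*E)" by simp
      then show ?thesis using \<open>\<bar>t*\<bar>E\<bar> - 7*lam/4\<bar> < 3*lam/4\<close> unfolding abs_less_iff by linarith
    qed
    moreover have "D*t = 12*lam/5" using tD by (simp add: mult.commute)
    ultimately show ?thesis using tD assms(1) \<open>0\<le>t\<close> le1 by (intro exI[of _ t]) auto
  qed
qed

lemma hit:
  fixes lam :: real and p0 a :: "real \<times> real" and c :: "real \<times> real"
  assumes "0 \<le> t" "t \<le> 1" "c \<in> gadget_centers lam"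
    "\<bar>t * fst (a - p0) - fst c\<bar> < gad_x lam / 2"
    "\<bar>t * snd (a - p0) - snd c\<bar> < gad_x lam / 2"
  shows "\<exists>Q \<in> gadget lam p0. closed_segment a p0 \<inter> interior Q \<noteq> {}"
proof -
  let ?Q = "open_square (p0 + c) (gad_x lam)"
  let ?p = "p0 + t *\<^sub>R (a - p0)"
  have "?p \<in> closed_segment a p0"
    unfolding in_segment using assms(1,2)
    by (intro exI[of _ "1 - t"]) (auto simp: algebra_simps)
  moreover have "?p \<in> ?Q" using assms(4,5)
    by (auto simp: open_square_def)
  moreover have "?Q \<in> gadget lam p0" using assms(3) by (auto simp: gadget_def)
  ultimately show ?thesis using open_open_square
    by (metis disjoint_iff interior_open)
qed

lemma hull_in:
  fixes lam u v :: real and p0 :: "real \<times> real"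
  assumes "0 < lam" "\<bar>u\<bar> < 5*lam/2" "\<bar>v\<bar> < 5*lam/2"
  shows "p0 + (u, v) \<in> gadget_hull lam p0"
proof -
  define m where "m = max (max \<bar>u\<bar> \<bar>v\<bar>) (2*lam)"
  have m1: "lam < m" "m < 5*lam/2" "\<bar>u\<bar> \<le> m" "\<bar>v\<bar> \<le> m"
    using assms by (auto simp: m_def)
  let ?H = "gadget_hull lam p0"
  have cv: "convex ?H" unfolding gadget_hull_def by (rule convex_convex_hull)
  have corner: "p0 + (s*m, r*m) \<in> ?H" if "s = 1 \<or> s = -1" "r = 1 \<or> r = -1" for s r
  proof -
    have cin: "(s*(7*lam/4), r*(7*lam/4)) \<in> gadget_centers lam"
      using that by (auto simp: gadget_centers_def gad_x_def gad_y_def Let_def)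
    have "p0 + (s*m, r*m) \<in> open_square (p0 + (s*(7*lam/4), r*(7*lam/4))) (gad_x lam)"
      using that m1 by (auto simp: open_square_def gad_x_def abs_if)
    hence "p0 + (s*m, r*m) \<in> \<Union> (gadget lam p0)" using cin
      by (auto simp: gadget_def)
    thus ?thesis unfolding gadget_hull_def by (meson hull_subset subsetD)
  qed
  have mpos: "m > 0" using m1 assms by linarith
  define w where "w = (u + m) / (2*m)"
  have w: "0 \<le> w" "w \<le> 1" using m1 mpos by (auto simp: w_def field_simps abs_le_iff)
  have uw: "(1 - w) * (-m) + w * m = u" using mpos by (simp add: w_def field_simps)
  have top: "p0 + (u, r*m) \<in> ?H" if "r = 1 \<or> r = -1" for r
  proof -
    have "(1 - w) *\<^sub>R (p0 + ((-1)*m, r*m)) + w *\<^sub>R (p0 + (1*m, r*m)) \<in> ?H"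
      using convexD[OF cv corner[OF _ that, of "-1"] corner[OF _ that, of 1], of "1-w" w] w
      by simp
    moreover have "(1 - w) *\<^sub>R (p0 + ((-1)*m, r*m)) + w *\<^sub>R (p0 + (1*m, r*m)) = p0 + (u, r*m)"
      using uw by (simp add: algebra_simps prod_eq_iff)
    ultimately show ?thesis by simp
  qed
  define z where "z = (v + m) / (2*m)"
  have z: "0 \<le> z" "z \<le> 1" using m1 mpos by (auto simp: z_def field_simps abs_le_iff)
  have vz: "(1 - z) * (-m) + z * m = v" using mpos by (simp add: z_def field_simps)
  have "(1 - z) *\<^sub>R (p0 + (u, (-1)*m)) + z *\<^sub>R (p0 + (u, 1*m)) \<in> ?H"
    using convexD[OF cv top[of "-1"] top[of 1], of "1-z" z] z by simp
  moreover have "(1 - z) *\<^sub>R (p0 + (u, (-1)*m)) + z *\<^sub>R (p0 + (u, 1*m)) = p0 + (u, v)"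
    using vz by (simp add: algebra_simps prod_eq_iff)
  ultimately show ?thesis by simp
qed

theorem lemma2p4:
  fixes lam :: real and p0 a :: "real \<times> real"
  assumes "0 < lam" and "lam \<le> 1"
    and "a \<notin> gadget_hull lam p0"
  shows "\<exists>Q \<in> gadget lam p0. closed_segment a p0 \<inter> interior Q \<noteq> {}"
proof -
  obtain d1 d2 where d: "a - p0 = (d1, d2)" by (cases "a - p0") auto
  have ad: "a = p0 + (d1, d2)" using d by (metis add.commute diff_add_cancel)
  have big: "5*lam/2 \<le> \<bar>d1\<bar> \<or> 5*lam/2 \<le> \<bar>d2\<bar>"
  proof (rule ccontr)
    assume "\<not> ?thesis"
    hence "\<bar>d1\<bar> < 5*lam/2" "\<bar>d2\<bar> < 5*lam/2" by auto
    hence "a \<in> gadget_hull lam p0" using hull_in[OF assms(1)] ad by simp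
    with assms(3) show False by simp
  qed
  have X: "gad_x lam / 2 = 3*lam/4" by (simp add: gad_x_def)
  have C: "(e1, e2) \<in> gadget_centers lam"
    if "e1 \<in> {0, 7*lam/4, -(7*lam/4)}" "e2 \<in> {0, 7*lam/4, -(7*lam/4)}" "e1 \<noteq> 0 \<or> e2 \<noteq> 0"
    for e1 e2
    using that by (auto simp: gadget_centers_def gad_x_def gad_y_def Let_def)
  show ?thesis
  proof (cases "\<bar>d1\<bar> \<le> \<bar>d2\<bar>")
    case True
    hence D: "5*lam/2 \<le> \<bar>d2\<bar>" using big by linarith
    obtain t where t: "0 \<le> t" "t \<le> 1" "\<bar>t*\<bar>d2\<bar> - 7*lam/4\<bar> < 3*lam/4"
      "\<bar>t*d1\<bar> < 3*lam/4 \<or> \<bar>t*d1 - 7*lam/4\<bar> < 3*lam/4 \<or> \<bar>t*d1 + 7*lam/4\<bar> < 3*lam/4"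
      using key[OF assms(1) D True] by blast
    obtain e2 where e2: "e2 \<in> {7*lam/4, -(7*lam/4)}" "\<bar>t*d2 - e2\<bar> < 3*lam/4"
    proof (cases "d2 \<ge> 0")
      case True
      then have "t*\<bar>d2\<bar> = t*d2" by simp
      then have h: "\<bar>t*d2 - 7*lam/4\<bar> < 3*lam/4" using t(3) unfolding abs_less_iff by linarith
      show ?thesis using that[OF _ h] by simp
    next
      case False
      then have "t*\<bar>d2\<bar> = -(t*d2)" by simp
      then have h: "\<bar>t*d2 - -(7*lam/4)\<bar> < 3*lam/4" using t(3) unfolding abs_less_iff by linarith
      show ?thesis using that[OF _ h] by simp
    qed
    obtain e1 where e1: "e1 \<in> {0, 7*lam/4, -(7*lam/4)}" "\<bar>t*d1 - e1\<bar> < 3*lam/4"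
    proof -
      consider "\<bar>t*d1\<bar> < 3*lam/4" | "\<bar>t*d1 - 7*lam/4\<bar> < 3*lam/4" | "\<bar>t*d1 + 7*lam/4\<bar> < 3*lam/4"
        using t(4) by blast
      then show ?thesis
      proof cases
        case 1
        then show ?thesis using that[of 0] by simp
      next
        case 2
        then show ?thesis using that[of "7*lam/4"] by simp
      next
        case 3
        then have "\<bar>t*d1 - -(7*lam/4)\<bar> < 3*lam/4" by simp
        then show ?thesis using that[of "-(7*lam/4)"] by simp
      qed
    qed
    have "e2 \<noteq> 0" "e2 \<in> {0, 7*lam/4, -(7*lam/4)}" using e2(1) assms(1) by auto
    hence "(e1, e2) \<in> gadget_centers lam" using C[OF e1(1)] by blast
    moreover have "\<bar>t * fst (a - p0) - fst (e1,e2)\<bar> < gad_x lam / 2" using e1(2) d X by simp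
    moreover have "\<bar>t * snd (a - p0) - snd (e1,e2)\<bar> < gad_x lam / 2" using e2(2) d X by simp
    ultimately show ?thesis by (rule hit[OF t(1,2)])
  next
    case False
    hence D: "5*lam/2 \<le> \<bar>d1\<bar>" using big by linarith
    have F: "\<bar>d2\<bar> \<le> \<bar>d1\<bar>" using False by linarith
    obtain t where t: "0 \<le> t" "t \<le> 1" "\<bar>t*\<bar>d1\<bar> - 7*lam/4\<bar> < 3*lam/4"
      "\<bar>t*d2\<bar> < 3*lam/4 \<or> \<bar>t*d2 - 7*lam/4\<bar> < 3*lam/4 \<or> \<bar>t*d2 + 7*lam/4\<bar> < 3*lam/4"
      using key[OF assms(1) D F] by blast
    obtain e1 where e1: "e1 \<in> {7*lam/4, -(7*lam/4)}" "\<bar>t*d1 - e1\<bar> < 3*lam/4"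
    proof (cases "d1 \<ge> 0")
      case True
      then have "t*\<bar>d1\<bar> = t*d1" by simp
      then have h: "\<bar>t*d1 - 7*lam/4\<bar> < 3*lam/4" using t(3) unfolding abs_less_iff by linarith
      show ?thesis using that[OF _ h] by simp
    next
      case False
      then have "t*\<bar>d1\<bar> = -(t*d1)" by simp
      then have h: "\<bar>t*d1 - -(7*lam/4)\<bar> < 3*lam/4" using t(3) unfolding abs_less_iff by linarith
      show ?thesis using that[OF _ h] by simp
    qed
    obtain e2 where e2: "e2 \<in> {0, 7*lam/4, -(7*lam/4)}" "\<bar>t*d2 - e2\<bar> < 3*lam/4"
    proof -
      consider "\<bar>t*d2\<bar> < 3*lam/4" | "\<bar>t*d2 - 7*lam/4\<bar> < 3*lam/4" | "\<bar>t*d2 + 7*lam/4\<bar> < 3*lam/4"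
        using t(4) by blast
      then show ?thesis
      proof cases
        case 1
        then show ?thesis using that[of 0] by simp
      next
        case 2
        then show ?thesis using that[of "7*lam/4"] by simp
      next
        case 3
        then have "\<bar>t*d2 - -(7*lam/4)\<bar> < 3*lam/4" by simp
        then show ?thesis using that[of "-(7*lam/4)"] by simp
      qed
    qed
    have "e1 \<noteq> 0" "e1 \<in> {0, 7*lam/4, -(7*lam/4)}" using e1(1) assms(1) by auto
    hence "(e1, e2) \<in> gadget_centers lam" using C[OF _ e2(1)] by blast
    moreover have "\<bar>t * fst (a - p0) - fst (e1,e2)\<bar> < gad_x lam / 2" using e1(2) d X by simp
    moreover have "\<bar>t * snd (a - p0) - snd (e1,e2)\<bar> < gad_x lam / 2" using e2(2) d X by simp
    ultimately show ?thesis by (rule hit[OF t(1,2)])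
  qed
qed

end
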